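(* Let $a,b$ be integers with $0<a<b$ and let $\gamma_1<\gamma_2<\cdots$ be the greedy dissociated sequence starting from $a,b$. For $n\ge1$ let $\mathscr S_n := \sum_{i=1}^n\gamma_i$, $\mathscr T_n := \mathscr S_n+1$, and $D_n := \left\{\sum_{i=1}^n\varepsilon_i\gamma_i:\ \varepsilon_i\in\{-1,0,1\}\right\}$. Then for every $n\ge 1$, $\mathscr T_n\notin D_n$. Consequently, $\gamma_{n+1}\le\mathscr T_n$ for all $n\ge 2$.
   Context: A set $\mathcal S\subseteq\mathbb N$ is dissociated if all of its finite subsets have different sums. The greedy dissociated sequence starting from $a,b$ is defined by $\gamma_1=a$, $\gamma_2=b$, and for $r\ge 3$, $\gamma_r$ is the smallest integer greater than $\gamma_{r-1}$ such that $\{\gamma_1,\dots,\gamma_r\}$ is dissociated. *)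

theory Defs
  imports Main
begin

definition dissociated :: "nat set \<Rightarrow> bool" where
  "dissociated S \<longleftrightarrow>
     (\<forall>A B. A \<subseteq> S \<longrightarrow> B \<subseteq> S \<longrightarrow> finite A \<longrightarrow> finite B \<longrightarrow> \<Sum>A = \<Sum>B \<longrightarrow> A = B)"

primrec glist :: "nat \<Rightarrow> nat \<Rightarrow> nat \<Rightarrow> nat list" where
  "glist a b 0 = [a, b]"
| "glist a b (Suc n) =
     (let xs = glist a b n
      in xs @ [LEAST x. x > last xs \<and> dissociated (insert x (set xs))])"

text \<open>The greedy dissociated sequence, 1-indexed: gamma a b r = gamma_r for r \<ge> 1.\<close>
definition gamma :: "nat \<Rightarrow> nat \<Rightarrow> nat \<Rightarrow> nat" where
  "gamma a b r = glist a b r ! (r - 1)"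

definition Dset :: "nat \<Rightarrow> nat \<Rightarrow> nat \<Rightarrow> int set" where
  "Dset a b n = {(\<Sum>i=1..n. \<epsilon> i * int (gamma a b i)) | \<epsilon>. \<forall>i. \<epsilon> i \<in> {-1, 0, 1}}"

end

theory Submission
  imports Defs
begin

lemma sum_set_le_list: "sum id (set (xs::nat list)) \<le> sum_list xs"
  by (induction xs) (auto simp: sum.insert_if)

lemma mem_le_Sum: "finite A \<Longrightarrow> (y::nat) \<in> A \<Longrightarrow> y \<le> \<Sum>A"
  by (simp add: sum.remove)

lemma diss_insert:
  assumes d: "dissociated X" and f: "finite X" and y: "y > \<Sum>X"
  shows "dissociated (insert y X)"
  unfolding dissociated_def
proof (intro allI impI)
  fix A B assume A: "A \<subseteq> insert y X" and B: "B \<subseteq> insert y X"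
    and fA: "finite A" and fB: "finite B" and eq: "\<Sum>A = \<Sum>B"
  have le: "\<Sum>C \<le> \<Sum>X" if "C \<subseteq> X" for C
    using f that by (simp add: sum_mono2)
  have yX: "y \<notin> X"
  proof
    assume "y \<in> X" then have "y \<le> \<Sum>X" using f by (simp add: mem_le_Sum)
    with y show False by simp
  qed
  show "A = B"
  proof (cases "y \<in> A"; cases "y \<in> B")
    assume a: "y \<in> A" and b: "y \<in> B"
    have "\<Sum>(A - {y}) = \<Sum>(B - {y})"
      using eq a b fA fB sum.remove[of A y id] sum.remove[of B y id] by simp
    moreover have "A - {y} \<subseteq> X" "B - {y} \<subseteq> X" using A B by auto
    ultimately have "A - {y} = B - {y}" using d fA fB unfolding dissociated_def by blast
    with a b show ?thesis by blast
  next
    assume a: "y \<in> A" and b: "y \<notin> B"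
    have "B \<subseteq> X" using B b by auto
    then have "\<Sum>B \<le> \<Sum>X" by (rule le)
    moreover have "y \<le> \<Sum>A" using a fA by (simp add: mem_le_Sum)
    ultimately show ?thesis using eq y by simp
  next
    assume a: "y \<notin> A" and b: "y \<in> B"
    have "A \<subseteq> X" using A a by auto
    then have "\<Sum>A \<le> \<Sum>X" by (rule le)
    moreover have "y \<le> \<Sum>B" using b fB by (simp add: mem_le_Sum)
    ultimately show ?thesis using eq y by simp
  next
    assume a: "y \<notin> A" and b: "y \<notin> B"
    have "A \<subseteq> X" "B \<subseteq> X" using A a B b by auto
    then show ?thesis using d fA fB eq unfolding dissociated_def by blast
  qed
qed

lemma glist_len: "length (glist a b n) = n + 2"
  by (induction n) (auto simp: Let_def)

lemma glist_prefix: "m \<le> k \<Longrightarrow> i < length (glist a b m) \<Longrightarrow> glist a b k ! i = glist a b m ! i"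
proof (induction k)
  case 0 then show ?case by simp
next
  case (Suc k)
  show ?case
  proof (cases "m = Suc k")
    case False
    then have "m \<le> k" using Suc by simp
    then have "i < length (glist a b k)" using Suc glist_len by (metis add_le_mono1 order_less_le_trans)
    then show ?thesis using Suc \<open>m \<le> k\<close> by (simp add: Let_def nth_append)
  qed simp
qed

lemma gamma_glist: "1 \<le> i \<Longrightarrow> i \<le> m + 2 \<Longrightarrow> gamma a b i = glist a b m ! (i - 1)"
  unfolding gamma_def
proof -
  assume i: "1 \<le> i" "i \<le> m + 2"
  show "glist a b i ! (i - 1) = glist a b m ! (i - 1)"
  proof (cases "i \<le> m")
    case True
    then show ?thesis using glist_prefix[of i m "i - 1" a b] glist_len i by simp
  next
    case False
    then show ?thesis using glist_prefix[of m i "i - 1" a b] glist_len i by simp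
  qed
qed

lemma glist_diss:
  assumes "0 < a" "a < b"
  shows "dissociated (set (glist a b n))"
proof (induction n)
  case 0
  show ?case unfolding dissociated_def
  proof (intro allI impI)
    fix A B assume A: "A \<subseteq> set (glist a b 0)" and B: "B \<subseteq> set (glist a b 0)"
      and "finite A" "finite B" and eq: "\<Sum>A = \<Sum>B"
    have sub: "C \<subseteq> {a, b} \<Longrightarrow> C = {} \<or> C = {a} \<or> C = {b} \<or> C = {a,b}" for C by blast
    from A B have "A \<subseteq> {a,b}" "B \<subseteq> {a,b}" by auto
    then have "A = {} \<or> A = {a} \<or> A = {b} \<or> A = {a,b}" "B = {} \<or> B = {a} \<or> B = {b} \<or> B = {a,b}"
      using sub by blast+
    then show "A = B" using eq assms by (elim disjE) simp_all
  qed
next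
  case (Suc n)
  define xs where "xs = glist a b n"
  define y where "y = sum_list xs + 1"
  have P: "y > last xs \<and> dissociated (insert y (set xs))"
  proof
    have "xs \<noteq> []" using glist_len[of a b n] xs_def by auto
    then have "last xs \<le> sum_list xs" by (simp add: member_le_sum_list)
    then show "y > last xs" using y_def by simp
    have "\<Sum>(set xs) \<le> sum_list xs" using sum_set_le_list[of xs] by simp
    then show "dissociated (insert y (set xs))"
      using diss_insert[of "set xs" y] Suc xs_def y_def by simp
  qed
  have "dissociated (insert (LEAST x. x > last xs \<and> dissociated (insert x (set xs))) (set xs))"
    using LeastI[of "\<lambda>x. x > last xs \<and> dissociated (insert x (set xs))", OF P] by blast
  then show ?case by (simp add: Let_def xs_def)
qed

theorem lemma2:
  fixes a b :: nat
  assumes "0 < a" and "a < b"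
  shows "(\<forall>n\<ge>1. int (\<Sum>i=1..n. gamma a b i) + 1 \<notin> Dset a b n)
       \<and> (\<forall>n\<ge>2. gamma a b (n + 1) \<le> (\<Sum>i=1..n. gamma a b i) + 1)"
proof (intro conjI allI impI)
  fix n :: nat assume "1 \<le> n"
  show "int (\<Sum>i=1..n. gamma a b i) + 1 \<notin> Dset a b n"
  proof
    assume "int (\<Sum>i=1..n. gamma a b i) + 1 \<in> Dset a b n"
    then obtain \<epsilon> where e: "\<forall>i. \<epsilon> i \<in> {-1, 0, 1}"
      and eq: "int (\<Sum>i=1..n. gamma a b i) + 1 = (\<Sum>i=1..n. \<epsilon> i * int (gamma a b i))"
      unfolding Dset_def by auto
    have "(\<Sum>i=1..n. \<epsilon> i * int (gamma a b i)) \<le> (\<Sum>i=1..n. int (gamma a b i))"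
    proof (rule sum_mono)
      fix i
      have "\<epsilon> i \<le> 1" using e[rule_format, of i] by auto
      then show "\<epsilon> i * int (gamma a b i) \<le> int (gamma a b i)"
        using mult_right_mono[of "\<epsilon> i" 1 "int (gamma a b i)"] by simp
    qed
    then show False using eq by simp
  qed
next
  fix n :: nat assume n2: "2 \<le> n"
  define m where "m = n - 2"
  define xs where "xs = glist a b m"
  have len: "length xs = n" using glist_len[of a b m] xs_def m_def n2 by simp
  have g1: "gamma a b (n + 1) = glist a b (m + 1) ! n"
    using gamma_glist[of "n+1" "m+1" a b] m_def n2 by simp
  have "glist a b (m + 1) ! n = (LEAST x. x > last xs \<and> dissociated (insert x (set xs)))"
    using len by (simp add: xs_def Let_def nth_append)
  moreover have "sum_list xs = (\<Sum>i=1..n. gamma a b i)"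
  proof -
    have "sum_list xs = (\<Sum>i<n. xs ! i)" using len by (simp add: sum_list_sum_nth lessThan_atLeast0)
    also have "\<dots> = (\<Sum>i=1..n. xs ! (i - 1))"
      by (rule sum.reindex_bij_witness[of _ "\<lambda>i. i - 1" "\<lambda>i. i + 1"]) auto
    also have "\<dots> = (\<Sum>i=1..n. gamma a b i)"
      proof (rule sum.cong)
      fix i assume "i \<in> {1..n}"
      then show "xs ! (i - 1) = gamma a b i"
        using gamma_glist[of i m a b] xs_def m_def n2 by auto
    qed simp
    finally show ?thesis .
  qed
  moreover have "sum_list xs + 1 > last xs \<and> dissociated (insert (sum_list xs + 1) (set xs))"
  proof
    have "xs \<noteq> []" using len n2 by auto
    then have "last xs \<le> sum_list xs" by (simp add: member_le_sum_list)
    then show "sum_list xs + 1 > last xs" by simp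
    have "\<Sum>(set xs) \<le> sum_list xs" using sum_set_le_list[of xs] by simp
    then show "dissociated (insert (sum_list xs + 1) (set xs))"
      using diss_insert[of "set xs" "sum_list xs + 1"] glist_diss[OF assms, of m] xs_def by simp
  qed
  ultimately show "gamma a b (n + 1) \<le> (\<Sum>i=1..n. gamma a b i) + 1"
    using g1 Least_le by metis
qed

end
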